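(* Let $X$ be a real Banach space and $(x_n)$ a bounded sequence in $X$. Suppose that $c>0$ is such that \[ \Big\|\sum_{j=1}^n \alpha_j x_j\Big\|\ge c\sum_{j=1}^n |\alpha_j| \] for all $n\in\mathbb{N}$ and all real numbers $\alpha_1,\dots,\alpha_n$. Then (i) $\delta_X(x_n)\ge 2c$, and (ii) $\operatorname{d}(\operatorname{clust}_{X^{**}}(x_n),X)\ge c$.
   Context: $X$ is identified with its canonical image in $X^{**}$. For a bounded sequence $(x_n)$ in $X$, $\operatorname{clust}_{X^{**}}(x_n)$ is the set of all weak$^*$ cluster points of $(x_n)$ in $X^{**}$ and $\delta_X(x_n)$ is the norm-diameter of this set (equivalently $\sup_{x^*\in B_{X^*}}(\limsup_n x^*(x_n)-\liminf_n x^*(x_n))$). For nonempty sets $A,B$, $\operatorname{d}(A,B)=\inf\{\|a-b\|: a\in A,b\in B\}$. *)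

theory Defs
  imports "HOL-Analysis.Analysis"
begin

definition canon_bidual :: "'a::real_normed_vector \<Rightarrow> (('a \<Rightarrow>\<^sub>L real) \<Rightarrow>\<^sub>L real)" where
  "canon_bidual x = Blinfun (\<lambda>f. blinfun_apply f x)"

text \<open>Weak-star topology on X**: initial topology of the evaluations F |-> F f, f in X*,
  i.e. pullback of the product (pointwise) topology on X* => real.\<close>
definition weak_star_topology :: "(('a::real_normed_vector \<Rightarrow>\<^sub>L real) \<Rightarrow>\<^sub>L real) topology" where
  "weak_star_topology = pullback_topology UNIV blinfun_apply (product_topology (\<lambda>_. euclideanreal) UNIV)"

definition clust_bidual :: "(nat \<Rightarrow> 'a::real_normed_vector) \<Rightarrow> (('a \<Rightarrow>\<^sub>L real) \<Rightarrow>\<^sub>L real) set" where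
  "clust_bidual x = {F. \<forall>U. openin weak_star_topology U \<and> F \<in> U \<longrightarrow>
       (\<exists>\<^sub>F n in sequentially. canon_bidual (x n) \<in> U)}"

definition delta_X :: "(nat \<Rightarrow> 'a::real_normed_vector) \<Rightarrow> real" where
  "delta_X x = diameter (clust_bidual x)"

end

theory Submission
  imports Defs
begin


definition sublin :: "('a::real_vector \<Rightarrow> real) \<Rightarrow> bool" where
  "sublin p \<longleftrightarrow> (\<forall>x y. p (x+y) \<le> p x + p y) \<and> (\<forall>t x. t \<ge> 0 \<longrightarrow> p (t *\<^sub>R x) = t * p x)"

lemma sublin_add: "sublin p \<Longrightarrow> p (x+y) \<le> p x + p y"
  by (simp add: sublin_def)
lemma sublin_hom: "sublin p \<Longrightarrow> t \<ge> 0 \<Longrightarrow> p (t *\<^sub>R x) = t * p x"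
  by (simp add: sublin_def)
lemma sublin_0: "sublin p \<Longrightarrow> p 0 = 0"
  using sublin_hom[of p 0 0] by simp
lemma sublin_lower: "sublin p \<Longrightarrow> - p (- x) \<le> p x"
  using sublin_add[of p x "-x"] sublin_0[of p] by simp

lemma chain_inf:
  fixes p :: "'a::real_vector \<Rightarrow> real"
  assumes sp: "sublin p" and C: "C \<noteq> {}" "\<And>q. q \<in> C \<Longrightarrow> sublin q \<and> (\<forall>x. q x \<le> p x)"
    and ch: "\<And>q1 q2. q1 \<in> C \<Longrightarrow> q2 \<in> C \<Longrightarrow> (\<forall>x. q1 x \<le> q2 x) \<or> (\<forall>x. q2 x \<le> q1 x)"
  defines "u \<equiv> \<lambda>x. Inf ((\<lambda>q. q x) ` C)"
  shows "sublin u \<and> (\<forall>x. u x \<le> p x) \<and> (\<forall>q\<in>C. \<forall>x. u x \<le> q x)"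
proof -
  have bdd: "bdd_below ((\<lambda>q. q x) ` C)" for x
  proof
    fix y assume "y \<in> (\<lambda>q. q x) ` C"
    then obtain q where q: "q \<in> C" "y = q x" by auto
    have "- p (-x) \<le> - q (-x)" using C(2)[OF q(1)] by simp
    also have "\<dots> \<le> q x" using sublin_lower C(2)[OF q(1)] by blast
    finally show "- p (-x) \<le> y" using q by simp
  qed
  have le: "u x \<le> q x" if "q \<in> C" for q x
    unfolding u_def using that bdd by (intro cInf_lower) auto
  have ge: "a \<le> u x" if "\<And>q. q \<in> C \<Longrightarrow> a \<le> q x" for a x
    unfolding u_def using that C(1) by (intro cInf_greatest) auto
  obtain q0 where q0: "q0 \<in> C" using C(1) by auto
  have add: "u (x+y) \<le> u x + u y" for x y
  proof -
    have 1: "u (x+y) \<le> q1 x + q2 y" if "q1 \<in> C" "q2 \<in> C" for q1 q2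
    proof (cases "\<forall>x. q1 x \<le> q2 x")
      case True
      have "u (x+y) \<le> q1 (x+y)" using le that by blast
      also have "\<dots> \<le> q1 x + q1 y" using C(2)[OF that(1)] sublin_add by blast
      also have "\<dots> \<le> q1 x + q2 y" using True by simp
      finally show ?thesis .
    next
      case False
      then have T: "\<forall>x. q2 x \<le> q1 x" using ch that by blast
      have "u (x+y) \<le> q2 (x+y)" using le that by blast
      also have "\<dots> \<le> q2 x + q2 y" using C(2)[OF that(2)] sublin_add by blast
      also have "\<dots> \<le> q1 x + q2 y" using T by simp
      finally show ?thesis .
    qed
    have 2: "u (x+y) - q2 y \<le> u x" if "q2 \<in> C" for q2
      using 1 that by (intro ge) force
    have "u (x+y) - u x \<le> u y"
      using 2 by (intro ge) force
    then show ?thesis by simp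
  qed
  have hom: "u (t *\<^sub>R x) = t * u x" if "t \<ge> 0" for t x
  proof (cases "t = 0")
    case True
    have "u 0 \<le> 0" using le[OF q0, of 0] sublin_0[of q0] C(2)[OF q0] by simp
    moreover have "0 \<le> u 0" using C(2) by (intro ge) (simp add: sublin_0)
    ultimately show ?thesis using True by simp
  next
    case False
    then have tp: "t > 0" using that by simp
    have "u (t *\<^sub>R x) / t \<le> u x"
    proof (rule ge)
      fix q assume q: "q \<in> C"
      have "u (t *\<^sub>R x) \<le> t * q x" using le[OF q, of "t *\<^sub>R x"] sublin_hom[of q t x] C(2)[OF q] that by simp
      then show "u (t *\<^sub>R x) / t \<le> q x" using tp by (simp add: divide_simps mult.commute)
    qed
    moreover have "u x \<le> u (t *\<^sub>R x) / t"
    proof -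
      have "t * u x \<le> u (t *\<^sub>R x)"
      proof (rule ge)
        fix q assume q: "q \<in> C"
        have "t * u x \<le> t * q x" using le[OF q] tp by (simp add: mult_left_mono)
        then show "t * u x \<le> q (t *\<^sub>R x)" using sublin_hom[of q t x] C(2)[OF q] that by simp
      qed
      then show ?thesis using tp by (simp add: divide_simps mult.commute)
    qed
    ultimately show ?thesis using tp by (simp add: divide_simps mult.commute)
  qed
  have "u x \<le> p x" for x using le[OF q0] C(2)[OF q0] order_trans by blast
  then show ?thesis using add hom le by (auto simp: sublin_def)
qed

lemma minimal_linear:
  fixes q :: "'a::real_vector \<Rightarrow> real"
  assumes sq: "sublin q"
    and minq: "\<And>r. sublin r \<Longrightarrow> (\<forall>x. r x \<le> q x) \<Longrightarrow> r = q"
  shows "q (x + a) = q x + q a"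
proof -
  define r where "r = (\<lambda>x. Inf ((\<lambda>t. q (x + t *\<^sub>R a) - t * q a) ` {0..}))"
  have bdd: "bdd_below ((\<lambda>t. q (x + t *\<^sub>R a) - t * q a) ` {0..})" for x
  proof
    fix y assume "y \<in> (\<lambda>t. q (x + t *\<^sub>R a) - t * q a) ` {0..}"
    then obtain t where t: "t \<ge> 0" "y = q (x + t *\<^sub>R a) - t * q a" by auto
    have "q (t *\<^sub>R a) \<le> q (x + t *\<^sub>R a) + q (-x)" using sublin_add[OF sq, of "x + t *\<^sub>R a" "-x"] by simp
    then show "- q (-x) \<le> y" using t sublin_hom[OF sq t(1)] by simp
  qed
  have le: "r x \<le> q (x + t *\<^sub>R a) - t * q a" if "t \<ge> 0" for x t
    unfolding r_def using that bdd by (intro cInf_lower) auto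
  have ge: "b \<le> r x" if "\<And>t. t \<ge> 0 \<Longrightarrow> b \<le> q (x + t *\<^sub>R a) - t * q a" for b x
    unfolding r_def using that by (intro cInf_greatest) auto
  have rle: "r x \<le> q x" for x using le[of 0 x] by simp
  have add: "r (x+y) \<le> r x + r y" for x y
  proof -
    have 1: "r (x+y) \<le> (q (x + t *\<^sub>R a) - t * q a) + (q (y + s *\<^sub>R a) - s * q a)"
      if "t \<ge> 0" "s \<ge> 0" for t s
    proof -
      have "r (x+y) \<le> q ((x+y) + (t+s) *\<^sub>R a) - (t+s) * q a" using le that by simp
      also have "q ((x+y) + (t+s) *\<^sub>R a) \<le> q (x + t *\<^sub>R a) + q (y + s *\<^sub>R a)"
        using sublin_add[OF sq, of "x + t *\<^sub>R a" "y + s *\<^sub>R a"] by (simp add: algebra_simps)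
      finally show ?thesis by (simp add: algebra_simps)
    qed
    have 2: "r (x+y) - (q (y + s *\<^sub>R a) - s * q a) \<le> r x" if "s \<ge> 0" for s
      using 1 that by (intro ge) force
    have "r (x+y) - r x \<le> r y" using 2 by (intro ge) force
    then show ?thesis by simp
  qed
  have hom: "r (t *\<^sub>R x) = t * r x" if "t \<ge> 0" for t x
  proof (cases "t = 0")
    case True
    have "r 0 \<le> 0" using rle[of 0] sublin_0[OF sq] by simp
    moreover have "0 \<le> r 0" by (intro ge) (simp add: sublin_hom[OF sq])
    ultimately show ?thesis using True by simp
  next
    case False
    then have tp: "t > 0" using that by simp
    have A: "r (t *\<^sub>R x) \<le> t * r x"
    proof -
      have "r (t *\<^sub>R x) / t \<le> r x"
      proof (rule ge)
        fix s :: real assume s: "s \<ge> 0"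
        have "r (t *\<^sub>R x) \<le> q (t *\<^sub>R x + (t * s) *\<^sub>R a) - (t * s) * q a" using le s tp by simp
        also have "q (t *\<^sub>R x + (t * s) *\<^sub>R a) = t * q (x + s *\<^sub>R a)"
          using sublin_hom[OF sq that, of "x + s *\<^sub>R a"] by (simp add: algebra_simps)
        finally have "r (t *\<^sub>R x) \<le> t * (q (x + s *\<^sub>R a) - s * q a)" by (simp add: algebra_simps)
        then show "r (t *\<^sub>R x) / t \<le> q (x + s *\<^sub>R a) - s * q a" using tp by (simp add: divide_simps mult.commute)
      qed
      then show ?thesis using tp by (simp add: divide_simps mult.commute)
    qed
    have B: "t * r x \<le> r (t *\<^sub>R x)"
    proof (rule ge)
      fix s :: real assume s: "s \<ge> 0"
      have "t * r x \<le> t * (q (x + (s/t) *\<^sub>R a) - (s/t) * q a)"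
        using le[of "s/t" x] s tp by (intro mult_left_mono) auto
      also have "\<dots> = q (t *\<^sub>R x + s *\<^sub>R a) - s * q a"
        using sublin_hom[OF sq that, of "x + (s/t) *\<^sub>R a"] tp by (simp add: algebra_simps)
      finally show "t * r x \<le> q (t *\<^sub>R x + s *\<^sub>R a) - s * q a" .
    qed
    from A B show ?thesis by simp
  qed
  have "sublin r" using add hom by (simp add: sublin_def)
  then have "r = q" using minq rle by blast
  then have "q x \<le> q (x + 1 *\<^sub>R a) - 1 * q a" using le[of 1 x] by simp
  then have "q x + q a \<le> q (x + a)" by simp
  moreover have "q (x + a) \<le> q x + q a" using sublin_add[OF sq] .
  ultimately show ?thesis by simp
qed

theorem hahn_banach_sublin:
  fixes p :: "'a::real_vector \<Rightarrow> real"
  assumes sp: "sublin p"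
  shows "\<exists>f. linear f \<and> (\<forall>x. f x \<le> p x)"
proof -
  define A where "A = {q. sublin q \<and> (\<forall>x. q x \<le> p x)}"
  define P where "P = (\<lambda>a u :: 'a \<Rightarrow> real. \<forall>x. u x \<le> a x)"
  have po: "partial_order_on A (relation_of P A)"
  proof (rule partial_order_on_relation_ofI)
    show "P a a" for a by (simp add: P_def)
    show "P a c" if "P a b" "P b c" for a b c unfolding P_def
    proof
      fix x have "b x \<le> a x" "c x \<le> b x" using that unfolding P_def by auto
      then show "c x \<le> a x" by linarith
    qed
    show "a = b" if "P a b" "P b a" for a b
    proof
      fix x have "b x \<le> a x" "a x \<le> b x" using that unfolding P_def by auto
      then show "a x = b x" by linarith
    qed
  qed
  have "\<exists>u \<in> A. \<forall>a \<in> C. P a u" if "C \<in> Chains (relation_of P A)" for C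
  proof (cases "C = {}")
    case True
    then show ?thesis using sp by (auto simp: A_def)
  next
    case False
    have CA: "sublin q \<and> (\<forall>x. q x \<le> p x)" if "q \<in> C" for q
    proof -
      have "(q,q) \<in> relation_of P A" using \<open>C \<in> Chains _\<close> that unfolding Chains_def by blast
      then have "q \<in> A" unfolding relation_of_def by blast
      then show ?thesis unfolding A_def by blast
    qed
    have ch: "(\<forall>x. q1 x \<le> q2 x) \<or> (\<forall>x. q2 x \<le> q1 x)" if "q1 \<in> C" "q2 \<in> C" for q1 q2
    proof -
      have "(q1,q2) \<in> relation_of P A \<or> (q2,q1) \<in> relation_of P A" using \<open>C \<in> Chains _\<close> that unfolding Chains_def by blast
      then have "P q1 q2 \<or> P q2 q1" unfolding relation_of_def by blast
      then show ?thesis unfolding P_def by blast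
    qed
    have "sublin (\<lambda>x. INF q\<in>C. q x) \<and> (\<forall>x. (INF q\<in>C. q x) \<le> p x) \<and> (\<forall>q\<in>C. \<forall>x. (INF q\<in>C. q x) \<le> q x)"
      by (rule chain_inf[OF sp False]) (fact CA, fact ch)
    then show ?thesis
      unfolding A_def P_def by (intro bexI[of _ "\<lambda>x. INF q\<in>C. q x"]) auto
  qed
  from predicate_Zorn[OF po this] obtain q where q: "q \<in> A" and minq: "\<And>a. a \<in> A \<Longrightarrow> P q a \<Longrightarrow> a = q"
    by blast
  have sq: "sublin q" and qp: "\<forall>x. q x \<le> p x" using q by (auto simp: A_def)
  have addq: "q (x + y) = q x + q y" for x y
  proof (rule minimal_linear[OF sq])
    fix r assume r: "sublin r" "\<forall>x. r x \<le> q x"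
    have "\<forall>x. r x \<le> p x" using r(2) qp by (meson order_trans)
    then have "r \<in> A" using r(1) by (simp add: A_def)
    moreover have "P q r" using r(2) by (simp add: P_def)
    ultimately show "r = q" using minq by blast
  qed
  have neg: "q (-x) = - q x" for x using addq[of x "-x"] sublin_0[OF sq] by simp
  have homq: "q (c *\<^sub>R x) = c * q x" for c x
  proof (cases "c \<ge> 0")
    case True then show ?thesis using sublin_hom[OF sq] by simp
  next
    case False
    have "q (c *\<^sub>R x) = q (- ((-c) *\<^sub>R x))" by simp
    also have "\<dots> = - ((-c) * q x)" using neg sublin_hom[OF sq, of "-c" x] False by simp
    finally show ?thesis by simp
  qed
  have "linear q" by (rule linearI) (auto simp: addq homq)
  then show ?thesis using qp by blast
qed



lemma sum_trunc:
  fixes m n :: nat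
  assumes "\<And>k. k \<ge> m \<Longrightarrow> g k = 0" "m \<le> n" shows "sum g {..<n} = sum g {..<m}"
proof (rule sum.mono_neutral_right)
  show "{..<m} \<subseteq> {..<n}" using assms(2) by auto
  show "\<forall>i\<in>{..<n} - {..<m}. g i = 0" using assms(1) by auto
qed simp

lemma cone_functional:
  fixes w :: "nat \<Rightarrow> 'a::real_normed_vector" and b :: "nat \<Rightarrow> real"
  assumes H: "\<And>n \<alpha>. (\<And>k. \<alpha> k \<ge> 0) \<Longrightarrow> (\<Sum>k<n. \<alpha> k * b k) \<le> norm (\<Sum>k<n. \<alpha> k *\<^sub>R w k)"
  shows "\<exists>f. linear f \<and> (\<forall>z. f z \<le> norm z) \<and> (\<forall>k. b k \<le> f (w k))"
proof -
  define val where "val = (\<lambda>z n \<alpha>. norm (z + (\<Sum>k<n. \<alpha> k *\<^sub>R w k)) - (\<Sum>k<n. \<alpha> k * b k))"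
  define D where "D = {(n::nat, \<alpha>::nat\<Rightarrow>real). \<forall>k. 0 \<le> \<alpha> k}"
  define p where "p = (\<lambda>z. Inf ((\<lambda>(n,\<alpha>). val z n \<alpha>) ` D))"
  have lb: "- norm z \<le> val z n \<alpha>" if "\<forall>k. 0 \<le> \<alpha> k" for z n \<alpha>
  proof -
    have "(\<Sum>k<n. \<alpha> k * b k) \<le> norm (\<Sum>k<n. \<alpha> k *\<^sub>R w k)" using H that by blast
    also have "\<dots> \<le> norm (z + (\<Sum>k<n. \<alpha> k *\<^sub>R w k)) + norm z"
      using norm_triangle_ineq4[of "z + (\<Sum>k<n. \<alpha> k *\<^sub>R w k)" z] by simp
    finally show ?thesis unfolding val_def by simp
  qed
  have bdd: "bdd_below ((\<lambda>(n,\<alpha>). val z n \<alpha>) ` D)" for z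
    using lb unfolding D_def by (intro bdd_belowI[of _ "- norm z"]) auto
  have le: "p z \<le> val z n \<alpha>" if "\<forall>k. 0 \<le> \<alpha> k" for z n \<alpha>
    unfolding p_def using bdd that by (intro cInf_lower) (auto simp: D_def)
  have ge: "a \<le> p z" if "\<And>n \<alpha>. \<forall>k. 0 \<le> \<alpha> k \<Longrightarrow> a \<le> val z n \<alpha>" for a z
    unfolding p_def using that by (intro cInf_greatest) (auto simp: D_def)
  have p0: "p z \<le> norm z" for z using le[of "\<lambda>_. 0" z 0] by (simp add: val_def)
  have add: "p (z1 + z2) \<le> p z1 + p z2" for z1 z2
  proof -
    have 1: "p (z1+z2) \<le> val z1 n1 \<alpha>1 + val z2 n2 \<alpha>2"
      if a1: "\<forall>k. 0 \<le> \<alpha>1 k" and a2: "\<forall>k. 0 \<le> \<alpha>2 k" for n1 n2 \<alpha>1 \<alpha>2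
    proof -
      define \<beta>1 where "\<beta>1 = (\<lambda>k. if k < n1 then \<alpha>1 k else 0)"
      define \<beta>2 where "\<beta>2 = (\<lambda>k. if k < n2 then \<alpha>2 k else 0)"
      define n where "n = max n1 n2"
      have s1: "(\<Sum>k<n. \<beta>1 k *\<^sub>R w k) = (\<Sum>k<n1. \<alpha>1 k *\<^sub>R w k)"
        "(\<Sum>k<n. \<beta>1 k * b k) = (\<Sum>k<n1. \<alpha>1 k * b k)"
        by (subst sum_trunc[of n1], auto simp: \<beta>1_def n_def)+
      have s2: "(\<Sum>k<n. \<beta>2 k *\<^sub>R w k) = (\<Sum>k<n2. \<alpha>2 k *\<^sub>R w k)"
        "(\<Sum>k<n. \<beta>2 k * b k) = (\<Sum>k<n2. \<alpha>2 k * b k)"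
        by (subst sum_trunc[of n2], auto simp: \<beta>2_def n_def)+
      have nn: "\<forall>k. 0 \<le> \<beta>1 k + \<beta>2 k" using a1 a2 by (simp add: \<beta>1_def \<beta>2_def)
      have "p (z1+z2) \<le> val (z1+z2) n (\<lambda>k. \<beta>1 k + \<beta>2 k)" using le[OF nn] by blast
      also have "\<dots> = norm ((z1 + (\<Sum>k<n1. \<alpha>1 k *\<^sub>R w k)) + (z2 + (\<Sum>k<n2. \<alpha>2 k *\<^sub>R w k)))
           - ((\<Sum>k<n1. \<alpha>1 k * b k) + (\<Sum>k<n2. \<alpha>2 k * b k))"
        unfolding val_def using s1 s2
        by (simp add: scaleR_add_left sum.distrib distrib_right algebra_simps)
      also have "\<dots> \<le> val z1 n1 \<alpha>1 + val z2 n2 \<alpha>2"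
        unfolding val_def using norm_triangle_ineq by simp
      finally show ?thesis .
    qed
    have 2: "p (z1+z2) - val z2 n2 \<alpha>2 \<le> p z1" if "\<forall>k. 0 \<le> \<alpha>2 k" for n2 \<alpha>2
    proof (rule ge)
      fix n \<alpha> assume a: "\<forall>k. 0 \<le> (\<alpha>::nat\<Rightarrow>real) k"
      show "p (z1+z2) - val z2 n2 \<alpha>2 \<le> val z1 n \<alpha>" using 1[OF a that, of n n2] by simp
    qed
    have "p (z1+z2) - p z1 \<le> p z2"
    proof (rule ge)
      fix n \<alpha> assume a: "\<forall>k. 0 \<le> (\<alpha>::nat\<Rightarrow>real) k"
      show "p (z1+z2) - p z1 \<le> val z2 n \<alpha>" using 2[OF a, of n] by simp
    qed
    then show ?thesis by simp
  qed
  have hom: "p (t *\<^sub>R z) = t * p z" if "t \<ge> 0" for t z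
  proof (cases "t = 0")
    case True
    have "0 \<le> p 0" by (intro ge) (use lb[of _ 0] in simp)
    then show ?thesis using p0[of 0] True by simp
  next
    case False
    then have tp: "t > 0" using that by simp
    have A: "p (t *\<^sub>R z) / t \<le> p z"
    proof (rule ge)
      fix n \<alpha> assume a: "\<forall>k. 0 \<le> (\<alpha>::nat\<Rightarrow>real) k"
      have "p (t *\<^sub>R z) \<le> val (t *\<^sub>R z) n (\<lambda>k. t * \<alpha> k)" using le a tp by simp
      also have "\<dots> = t * val z n \<alpha>"
      proof -
        have "t *\<^sub>R z + (\<Sum>k<n. (t * \<alpha> k) *\<^sub>R w k) = t *\<^sub>R (z + (\<Sum>k<n. \<alpha> k *\<^sub>R w k))"
          by (simp add: scaleR_add_right scaleR_sum_right)
        moreover have "(\<Sum>k<n. t * \<alpha> k * b k) = t * (\<Sum>k<n. \<alpha> k * b k)"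
          by (simp add: sum_distrib_left mult.assoc)
        ultimately show ?thesis unfolding val_def using tp by (simp add: right_diff_distrib)
      qed
      finally show "p (t *\<^sub>R z) / t \<le> val z n \<alpha>" using tp by (simp add: divide_simps mult.commute)
    qed
    have B: "t * p z \<le> p (t *\<^sub>R z)"
    proof (rule ge)
      fix n \<alpha> assume a: "\<forall>k. 0 \<le> (\<alpha>::nat\<Rightarrow>real) k"
      have a': "\<forall>k. 0 \<le> \<alpha> k / t" using a tp by simp
      have "t * p z \<le> t * val z n (\<lambda>k. \<alpha> k / t)" using le[OF a'] tp by (simp add: mult_left_mono)
      also have "\<dots> = val (t *\<^sub>R z) n \<alpha>"
      proof -
        have "t *\<^sub>R (z + (\<Sum>k<n. (\<alpha> k / t) *\<^sub>R w k)) = t *\<^sub>R z + (\<Sum>k<n. \<alpha> k *\<^sub>R w k)"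
          using tp by (simp add: scaleR_add_right scaleR_sum_right)
        moreover have "t * (\<Sum>k<n. \<alpha> k / t * b k) = (\<Sum>k<n. \<alpha> k * b k)"
          using tp by (simp add: sum_distrib_left)
        ultimately show ?thesis unfolding val_def using tp
          by (metis (no_types, lifting) abs_of_pos norm_scaleR right_diff_distrib)
      qed
      finally show "t * p z \<le> val (t *\<^sub>R z) n \<alpha>" .
    qed
    from A B tp show ?thesis by (simp add: divide_simps mult.commute)
  qed
  have "sublin p" using add hom by (simp add: sublin_def)
  from hahn_banach_sublin[OF this] obtain f where f: "linear f" "\<forall>x. f x \<le> p x" by blast
  have "b k \<le> f (w k)" for k
  proof -
    define \<alpha> where "\<alpha> = (\<lambda>j. if j = k then 1 else (0::real))"
    have "(\<Sum>j<Suc k. \<alpha> j *\<^sub>R w j) = w k" "(\<Sum>j<Suc k. \<alpha> j * b j) = b k"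
      by (simp_all add: \<alpha>_def if_distrib sum.delta cong: if_cong)
    then have "val (- w k) (Suc k) \<alpha> = - b k" by (simp add: val_def)
    then have "p (- w k) \<le> - b k" using le[of \<alpha> "- w k" "Suc k"] by (simp add: \<alpha>_def)
    moreover have "f (- w k) = - f (w k)" using f(1) by (simp add: linear_neg)
    ultimately show ?thesis using f(2) by (metis neg_le_iff_le order_trans)
  qed
  then show ?thesis using f p0 order_trans by blast
qed



lemma sum_window:
  fixes h :: "nat \<Rightarrow> 'b::comm_monoid_add"
  assumes N: "N \<ge> 1" and z: "\<And>j. \<not> (N \<le> j \<and> j < N + m) \<Longrightarrow> h j = 0"
  shows "sum h {1..N+m} = (\<Sum>k<m. h (N + k))"
proof -
  have "sum h {1..N+m} = sum h {N..<N+m}"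
    by (rule sum.mono_neutral_right) (use N z in auto)
  also have "{N..<N+m} = (+) N ` {0..<m}" using image_add_atLeastLessThan[of N 0 m] by (simp add: add.commute)
  also have "sum h \<dots> = (\<Sum>k\<in>{0..<m}. h (N + k))" by (subst sum.reindex) (auto simp: o_def)
  finally show ?thesis by (simp add: lessThan_atLeast0)
qed

lemma sum_split_add:
  fixes m1 m2 :: nat
  shows "(\<Sum>k<m1+m2. g k) = (\<Sum>k<m1. g k) + (\<Sum>k<m2. g (m1 + k))"
  by (induction m2) (simp_all add: algebra_simps)

lemma l1_window:
  fixes x :: "nat \<Rightarrow> 'a::real_normed_vector"
  assumes l1: "\<And>n (\<alpha>::nat \<Rightarrow> real). norm (\<Sum>j=1..n. \<alpha> j *\<^sub>R x j) \<ge> c * (\<Sum>j=1..n. \<bar>\<alpha> j\<bar>)"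
    and N: "N \<ge> 1"
  shows "c * (\<Sum>k<m. \<bar>\<gamma> k\<bar>) \<le> norm (\<Sum>k<m. \<gamma> k *\<^sub>R x (N + k))"
proof -
  define \<beta> where "\<beta> = (\<lambda>j. if N \<le> j \<and> j < N + m then \<gamma> (j - N) else 0)"
  have 1: "(\<Sum>j=1..N+m. \<beta> j *\<^sub>R x j) = (\<Sum>k<m. \<gamma> k *\<^sub>R x (N + k))"
    by (subst sum_window[OF N]) (auto simp: \<beta>_def)
  have 2: "(\<Sum>j=1..N+m. \<bar>\<beta> j\<bar>) = (\<Sum>k<m. \<bar>\<gamma> k\<bar>)"
    by (subst sum_window[OF N]) (auto simp: \<beta>_def)
  show ?thesis using l1[of \<beta> "N+m"] 1 2 by simp
qed

lemma canon_apply: "blinfun_apply (canon_bidual x) f = blinfun_apply f x"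
proof -
  have "bounded_linear (\<lambda>f::'a \<Rightarrow>\<^sub>L real. blinfun_apply f x)"
    by (rule bounded_bilinear.bounded_linear_left[OF bounded_bilinear_blinfun_apply])
  then show ?thesis by (simp add: canon_bidual_def bounded_linear_Blinfun_apply)
qed

lemma openin_ws:
  assumes "open V"
  shows "openin weak_star_topology {H. blinfun_apply H f \<in> V}"
proof -
  have "openin (product_topology (\<lambda>_. euclideanreal) UNIV) {\<psi> \<in> topspace (product_topology (\<lambda>_. euclideanreal) UNIV). \<psi> f \<in> V}"
    by (rule openin_continuous_map_preimage[OF continuous_map_product_projection])
       (use assms open_openin in auto)
  moreover have "{\<psi> \<in> topspace (product_topology (\<lambda>_. euclideanreal) UNIV). \<psi> f \<in> V} = {\<psi>. \<psi> f \<in> V}"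
    by simp
  ultimately have op: "openin (product_topology (\<lambda>_. euclideanreal) UNIV) {\<psi>. \<psi> f \<in> V}" by simp
  have eq: "{H. blinfun_apply H f \<in> V} = blinfun_apply -` {\<psi>. \<psi> f \<in> V} \<inter> UNIV" by blast
  show ?thesis unfolding weak_star_topology_def openin_pullback_topology
    using op eq by blast
qed

lemma clust_ge:
  assumes G: "G \<in> clust_bidual s" and ev: "eventually (\<lambda>n. a \<le> blinfun_apply f (s n)) sequentially"
  shows "a \<le> blinfun_apply G f"
proof (rule ccontr)
  assume "\<not> a \<le> blinfun_apply G f"
  then have "G \<in> {H. blinfun_apply H f \<in> {..<a}}" by simp
  moreover have "openin weak_star_topology {H. blinfun_apply H f \<in> {..<a}}" by (rule openin_ws) simp
  ultimately have "\<exists>\<^sub>F n in sequentially. canon_bidual (s n) \<in> {H. blinfun_apply H f \<in> {..<a}}"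
    using G unfolding clust_bidual_def by blast
  then have "\<exists>\<^sub>F n in sequentially. blinfun_apply f (s n) < a" by (simp add: canon_apply)
  moreover have "eventually (\<lambda>n. \<not> blinfun_apply f (s n) < a) sequentially"
    using ev by (rule eventually_mono) simp
  ultimately show False by (simp add: frequently_def)
qed

lemma clust_le:
  assumes G: "G \<in> clust_bidual s" and ev: "eventually (\<lambda>n. blinfun_apply f (s n) \<le> a) sequentially"
  shows "blinfun_apply G f \<le> a"
proof -
  have "eventually (\<lambda>n. - a \<le> blinfun_apply (- f) (s n)) sequentially"
    using ev by (rule eventually_mono) (simp add: blinfun.minus_left)
  from clust_ge[OF G this] show ?thesis by (simp add: blinfun.minus_right)
qed

lemma clust_norm:
  assumes G: "G \<in> clust_bidual s" and M: "\<And>n. norm (s n) \<le> M"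
  shows "norm G \<le> M"
proof -
  have M0: "0 \<le> M" using M[of 0] norm_ge_zero order_trans by blast
  have "norm (blinfun_apply G f) \<le> M * norm f" for f
  proof -
    have b: "\<bar>blinfun_apply f (s n)\<bar> \<le> M * norm f" for n
    proof -
      have "norm f * norm (s n) \<le> norm f * M" by (rule mult_left_mono[OF M[of n] norm_ge_zero])
      then show ?thesis using norm_blinfun[of f "s n"] by (simp add: mult.commute)
    qed
    have b1: "blinfun_apply f (s n) \<le> M * norm f" for n using b[of n] by arith
    have b2: "- (M * norm f) \<le> blinfun_apply f (s n)" for n using b[of n] by arith
    have "blinfun_apply G f \<le> M * norm f" using b1 by (intro clust_le[OF G] always_eventually) auto
    moreover have "- (M * norm f) \<le> blinfun_apply G f" using b2 by (intro clust_ge[OF G] always_eventually) auto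
    ultimately show ?thesis by simp
  qed
  then show ?thesis by (rule norm_blinfun_bound[OF M0])
qed

lemma clust_subseq:
  assumes r: "strict_mono r" shows "clust_bidual (s \<circ> r) \<subseteq> clust_bidual s"
proof
  fix G assume G: "G \<in> clust_bidual (s \<circ> r)"
  show "G \<in> clust_bidual s" unfolding clust_bidual_def
  proof (intro CollectI allI impI)
    fix U assume U: "openin weak_star_topology U \<and> G \<in> U"
    then have "\<exists>\<^sub>F n in sequentially. canon_bidual (s (r n)) \<in> U" using G by (auto simp: clust_bidual_def)
    then have "\<forall>N. \<exists>n\<ge>N. canon_bidual (s (r n)) \<in> U" by (simp add: frequently_sequentially)
    then have "\<exists>n\<ge>N. canon_bidual (s n) \<in> U" for N
    proof -
      assume "\<forall>N. \<exists>n\<ge>N. canon_bidual (s (r n)) \<in> U"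
      then obtain n where n: "n \<ge> N" "canon_bidual (s (r n)) \<in> U" by blast
      have "r n \<ge> N" using seq_suble[OF r, of n] n(1) by linarith
      then show ?thesis using n(2) by blast
    qed
    then show "\<exists>\<^sub>F n in sequentially. canon_bidual (s n) \<in> U" by (simp add: frequently_sequentially)
  qed
qed

lemma compactin_cluster:
  assumes K: "compactin T K" and s: "\<And>n. s n \<in> K"
  shows "\<exists>p\<in>K. \<forall>U. openin T U \<and> p \<in> U \<longrightarrow> (\<exists>\<^sub>F n in sequentially. s n \<in> U)"
proof (rule ccontr)
  assume "\<not> ?thesis"
  then have "\<forall>p\<in>K. \<exists>U. openin T U \<and> p \<in> U \<and> eventually (\<lambda>n. s n \<notin> U) sequentially"
    by (auto simp: frequently_def)
  then obtain U where U: "\<And>p. p \<in> K \<Longrightarrow> openin T (U p) \<and> p \<in> U p \<and> eventually (\<lambda>n. s n \<notin> U p) sequentially"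
    by metis
  have "K \<subseteq> \<Union>(U ` K)" using U by blast
  moreover have "\<forall>B\<in>U ` K. openin T B" using U by blast
  ultimately have "\<exists>F. finite F \<and> F \<subseteq> U ` K \<and> K \<subseteq> \<Union>F"
    using K unfolding compactin_def by (elim conjE) (drule spec[of _ "U ` K"], blast)
  then obtain F where F: "finite F" "F \<subseteq> U ` K" "K \<subseteq> \<Union>F" by blast
  then obtain K' where K': "finite K'" "K' \<subseteq> K" "F = U ` K'" by (meson finite_subset_image)
  have "eventually (\<lambda>n. \<forall>p\<in>K'. s n \<notin> U p) sequentially"
    using K' U by (intro eventually_ball_finite) auto
  then obtain N where "\<forall>n\<ge>N. \<forall>p\<in>K'. s n \<notin> U p" unfolding eventually_sequentially by blast
  then obtain n where "\<forall>p\<in>K'. s n \<notin> U p" by blast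
  moreover have "s n \<in> \<Union>F" using s F by blast
  ultimately show False using K' by blast
qed



lemma clust_exists:
  fixes s :: "nat \<Rightarrow> 'a::real_normed_vector"
  assumes M: "\<And>n. norm (s n) \<le> M"
  shows "\<exists>G. G \<in> clust_bidual s"
proof -
  define T where "T = product_topology (\<lambda>_::('a \<Rightarrow>\<^sub>L real). euclideanreal) UNIV"
  define K where "K = PiE UNIV (\<lambda>f::('a \<Rightarrow>\<^sub>L real). cball (0::real) (M * norm f))"
  define \<phi> where "\<phi> = (\<lambda>n (f::'a \<Rightarrow>\<^sub>L real). blinfun_apply f (s n))"
  have topT: "topspace T = UNIV" unfolding T_def by simp
  have K: "compactin T K" unfolding T_def K_def
    by (simp add: compactin_PiE compactin_euclidean_iff)
  have bnd: "\<bar>blinfun_apply f (s n)\<bar> \<le> M * norm f" for f n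
  proof -
    have "norm f * norm (s n) \<le> norm f * M" by (rule mult_left_mono[OF M[of n] norm_ge_zero])
    then show ?thesis using norm_blinfun[of f "s n"] by (simp add: mult.commute)
  qed
  have \<phi>K: "\<phi> n \<in> K" for n
    unfolding K_def PiE_UNIV_domain \<phi>_def using bnd by (simp add: dist_real_def)
  from compactin_cluster[of T K \<phi>, OF K \<phi>K] obtain \<Phi> where \<Phi>K: "\<Phi> \<in> K"
    and \<Phi>cl0: "\<forall>U. openin T U \<and> \<Phi> \<in> U \<longrightarrow> (\<exists>\<^sub>F n in sequentially. \<phi> n \<in> U)"
    by (elim bexE) (rule that; assumption)
  have \<Phi>cl: "\<exists>\<^sub>F n in sequentially. \<phi> n \<in> U" if "openin T U" "\<Phi> \<in> U" for U
    using \<Phi>cl0 that by simp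
  have cl: "\<Phi> \<in> C" if C: "closedin T C" and \<phi>C: "\<And>n. \<phi> n \<in> C" for C
  proof (rule ccontr)
    assume "\<Phi> \<notin> C"
    then have "\<Phi> \<in> topspace T - C" using topT by simp
    moreover have "openin T (topspace T - C)" using C by (simp add: closedin_def)
    ultimately have "\<exists>\<^sub>F n in sequentially. \<phi> n \<in> topspace T - C" using \<Phi>cl by blast
    moreover have "eventually (\<lambda>n. \<not> \<phi> n \<in> topspace T - C) sequentially"
      using \<phi>C by (intro always_eventually) simp
    ultimately show False by (simp add: frequently_def)
  qed
  have proj: "continuous_map T euclideanreal (\<lambda>\<psi>. \<psi> f)" for f
    unfolding T_def by (rule continuous_map_product_projection) simp
  have cl0: "closedin euclideanreal {0::real}" using closed_closedin by blast
  have add: "\<Phi> (f + g) = \<Phi> f + \<Phi> g" for f g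
  proof -
    have "closedin T {\<psi> \<in> topspace T. \<psi> (f + g) - \<psi> f - \<psi> g \<in> {0}}"
      by (rule closedin_continuous_map_preimage[OF _ cl0]) (intro continuous_map_diff proj)
    moreover have "\<phi> n \<in> {\<psi> \<in> topspace T. \<psi> (f + g) - \<psi> f - \<psi> g \<in> {0}}" for n
      using topT by (simp add: \<phi>_def blinfun.add_left)
    ultimately have "\<Phi> \<in> {\<psi> \<in> topspace T. \<psi> (f + g) - \<psi> f - \<psi> g \<in> {0}}" by (rule cl)
    then show ?thesis by simp
  qed
  have scal: "\<Phi> (r *\<^sub>R f) = r * \<Phi> f" for r f
  proof -
    have "closedin T {\<psi> \<in> topspace T. \<psi> (r *\<^sub>R f) - r * \<psi> f \<in> {0}}"
      by (rule closedin_continuous_map_preimage[OF _ cl0]) (intro continuous_map_diff continuous_map_real_mult_left proj)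
    moreover have "\<phi> n \<in> {\<psi> \<in> topspace T. \<psi> (r *\<^sub>R f) - r * \<psi> f \<in> {0}}" for n
      using topT by (simp add: \<phi>_def blinfun.scaleR_left)
    ultimately have "\<Phi> \<in> {\<psi> \<in> topspace T. \<psi> (r *\<^sub>R f) - r * \<psi> f \<in> {0}}" by (rule cl)
    then show ?thesis by simp
  qed
  have bd: "norm (\<Phi> f) \<le> norm f * M" for f
  proof -
    have "\<Phi> f \<in> cball 0 (M * norm f)" using \<Phi>K unfolding K_def PiE_UNIV_domain by blast
    then show ?thesis by (simp add: dist_real_def mult.commute)
  qed
  have bl: "bounded_linear \<Phi>"
    by (rule bounded_linear_intro[OF add _ bd]) (simp add: scal)
  define G where "G = Blinfun \<Phi>"
  have G: "blinfun_apply G = \<Phi>" unfolding G_def using bl by (rule bounded_linear_Blinfun_apply)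
  have "G \<in> clust_bidual s" unfolding clust_bidual_def
  proof (intro CollectI allI impI)
    fix U assume U: "openin weak_star_topology U \<and> G \<in> U"
    then obtain V where V: "openin T V" "U = blinfun_apply -` V \<inter> UNIV"
      unfolding weak_star_topology_def openin_pullback_topology T_def by blast
    then have "\<Phi> \<in> V" using U G by auto
    then have "\<exists>\<^sub>F n in sequentially. \<phi> n \<in> V" using \<Phi>cl V(1) by blast
    moreover have "blinfun_apply (canon_bidual (s n)) = \<phi> n" for n
      by (rule ext) (simp add: canon_apply \<phi>_def)
    ultimately show "\<exists>\<^sub>F n in sequentially. canon_bidual (s n) \<in> U"
      using V(2) by (auto elim!: frequently_elim1)
  qed
  then show ?thesis by blast
qed



lemma mkF:
  fixes f :: "'a::real_normed_vector \<Rightarrow> real"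
  assumes lf: "linear f" and le: "\<And>z. f z \<le> norm z"
  shows "\<exists>F. blinfun_apply F = f \<and> norm F \<le> 1"
proof -
  have ab: "norm (f z) \<le> norm z * 1" for z
  proof -
    have "- f z \<le> norm z" using le[of "-z"] linear_neg[OF lf, of z] by simp
    then show ?thesis using le[of z] by simp
  qed
  have bl: "bounded_linear f"
    by (rule bounded_linear_intro[OF linear_add[OF lf] linear_scale[OF lf] ab])
  have "blinfun_apply (Blinfun f) = f" using bl by (rule bounded_linear_Blinfun_apply)
  moreover have "norm (Blinfun f) \<le> 1"
    by (rule norm_blinfun_bound) (use ab calculation in simp_all)
  ultimately show ?thesis by blast
qed

lemma far:
  fixes x :: "nat \<Rightarrow> 'a::real_normed_vector"
  assumes l1: "\<And>n (\<alpha>::nat \<Rightarrow> real). norm (\<Sum>j=1..n. \<alpha> j *\<^sub>R x j) \<ge> c * (\<Sum>j=1..n. \<bar>\<alpha> j\<bar>)"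
    and e: "e > 0"
  shows "\<exists>N\<ge>1. \<forall>m \<gamma>. (\<forall>k. \<gamma> k \<ge> 0) \<longrightarrow> c * (\<Sum>k<m. \<gamma> k) - e \<le> norm ((\<Sum>k<m. \<gamma> k *\<^sub>R x (N+k)) - y)"
proof (rule ccontr)
  assume nt: "\<not> ?thesis"
  have H: "\<exists>m \<gamma>. (\<forall>k. \<gamma> k \<ge> 0) \<and> norm ((\<Sum>k<m. \<gamma> k *\<^sub>R x (N+k)) - y) < c * (\<Sum>k<m. \<gamma> k) - e"
    if "N \<ge> 1" for N
  proof -
    from nt that have "\<not> (\<forall>m \<gamma>. (\<forall>k. \<gamma> k \<ge> 0) \<longrightarrow> c * (\<Sum>k<m. \<gamma> k) - e \<le> norm ((\<Sum>k<m. \<gamma> k *\<^sub>R x (N+k)) - y))"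
      by blast
    then show ?thesis by (simp add: not_le)
  qed
  obtain m1 \<gamma>1 where g1: "\<forall>k. \<gamma>1 k \<ge> 0" "norm ((\<Sum>k<m1. \<gamma>1 k *\<^sub>R x (1+k)) - y) < c * (\<Sum>k<m1. \<gamma>1 k) - e"
    using H[of 1] by auto
  obtain m2 \<gamma>2 where g2: "\<forall>k. \<gamma>2 k \<ge> 0" "norm ((\<Sum>k<m2. \<gamma>2 k *\<^sub>R x ((1+m1)+k)) - y) < c * (\<Sum>k<m2. \<gamma>2 k) - e"
    using H[of "1+m1"] by auto
  define v1 where "v1 = (\<Sum>k<m1. \<gamma>1 k *\<^sub>R x (1+k))"
  define v2 where "v2 = (\<Sum>k<m2. \<gamma>2 k *\<^sub>R x ((1+m1)+k))"
  define \<delta> where "\<delta> = (\<lambda>k. if k < m1 then \<gamma>1 k else - \<gamma>2 (k - m1))"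
  have s1: "(\<Sum>k<m1+m2. \<delta> k *\<^sub>R x (1+k)) = v1 - v2"
    unfolding sum_split_add v1_def v2_def
    by (simp add: \<delta>_def sum_negf add.assoc)
  have s2: "(\<Sum>k<m1+m2. \<bar>\<delta> k\<bar>) = (\<Sum>k<m1. \<gamma>1 k) + (\<Sum>k<m2. \<gamma>2 k)"
    unfolding sum_split_add using g1(1) g2(1) by (simp add: \<delta>_def)
  have "c * ((\<Sum>k<m1. \<gamma>1 k) + (\<Sum>k<m2. \<gamma>2 k)) \<le> norm (v1 - v2)"
    using l1_window[OF l1, where N=1 and m="m1+m2" and \<gamma>=\<delta>] s1 s2 by simp
  also have "\<dots> \<le> norm (v1 - y) + norm (v2 - y)"
    using norm_triangle_ineq4[of "v1 - y" "v2 - y"] by simp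
  also have "\<dots> < c * (\<Sum>k<m1. \<gamma>1 k) - e + (c * (\<Sum>k<m2. \<gamma>2 k) - e)"
    using g1(2) g2(2) unfolding v1_def v2_def by simp
  finally show False using e by (simp add: distrib_left)
qed


theorem lemma2p1:
  fixes x :: "nat \<Rightarrow> 'a::banach" and c :: real
  assumes bdd: "bounded (range x)"
    and c_pos: "c > 0"
    and l1: "\<And>n (\<alpha>::nat \<Rightarrow> real). norm (\<Sum>j=1..n. \<alpha> j *\<^sub>R x j) \<ge> c * (\<Sum>j=1..n. \<bar>\<alpha> j\<bar>)"
  shows "delta_X x \<ge> 2 * c \<and> setdist (clust_bidual x) (range canon_bidual) \<ge> c"
proof -
  obtain M where M: "\<And>n. norm (x n) \<le> M" using bdd unfolding bounded_iff by blast
  have bc: "bounded (clust_bidual x)"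
    unfolding bounded_iff using clust_norm[of _ x M, OF _ M] by blast
  define w where "w = (\<lambda>k. ((-1::real) ^ Suc k) *\<^sub>R x (1 + k))"
  have H1: "(\<Sum>k<n. \<alpha> k * c) \<le> norm (\<Sum>k<n. \<alpha> k *\<^sub>R w k)" if a: "\<And>k. \<alpha> k \<ge> 0" for n \<alpha>
  proof -
    define \<gamma> where "\<gamma> = (\<lambda>k. \<alpha> k * (-1::real) ^ Suc k)"
    have "c * (\<Sum>k<n. \<bar>\<gamma> k\<bar>) \<le> norm (\<Sum>k<n. \<gamma> k *\<^sub>R x (1 + k))"
      by (rule l1_window[OF l1]) simp
    moreover have "(\<Sum>k<n. \<bar>\<gamma> k\<bar>) = (\<Sum>k<n. \<alpha> k)"
      using a by (simp add: \<gamma>_def abs_mult)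
    moreover have "(\<Sum>k<n. \<gamma> k *\<^sub>R x (1 + k)) = (\<Sum>k<n. \<alpha> k *\<^sub>R w k)"
      by (simp add: \<gamma>_def w_def)
    ultimately show ?thesis by (simp add: sum_distrib_left mult.commute)
  qed
  obtain f where f: "linear f" "\<And>z. f z \<le> norm z" "\<And>k. c \<le> f (w k)"
    using cone_functional[of "\<lambda>_. c" w] H1 by blast
  obtain F where F: "blinfun_apply F = f" "norm F \<le> 1" using mkF[OF f(1) f(2)] by blast
  have ev: "c \<le> f (x (2*k+2))" for k
    using f(3)[of "2*k+1"] by (simp add: w_def)
  have od: "f (x (2*k+1)) \<le> - c" for k
    using f(3)[of "2*k"] linear_neg[OF f(1), of "x (Suc (2*k))"] by (simp add: w_def)
  define r1 where "r1 = (\<lambda>k::nat. 2*k+2)"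
  define r2 where "r2 = (\<lambda>k::nat. 2*k+1)"
  have sm: "strict_mono r1" "strict_mono r2" unfolding r1_def r2_def by (auto intro: strict_monoI)
  obtain G1 where G1: "G1 \<in> clust_bidual (x \<circ> r1)" using clust_exists[of "x \<circ> r1" M] M by auto
  obtain G2 where G2: "G2 \<in> clust_bidual (x \<circ> r2)" using clust_exists[of "x \<circ> r2" M] M by auto
  have G1x: "G1 \<in> clust_bidual x" using G1 clust_subseq[OF sm(1)] by blast
  have G2x: "G2 \<in> clust_bidual x" using G2 clust_subseq[OF sm(2)] by blast
  have v1: "c \<le> blinfun_apply G1 F"
    by (rule clust_ge[OF G1]) (use ev in \<open>simp add: F r1_def\<close>)
  have v2: "blinfun_apply G2 F \<le> - c"
    by (rule clust_le[OF G2]) (use od in \<open>simp add: F r2_def\<close>)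
  have "2 * c \<le> blinfun_apply (G1 - G2) F" using v1 v2 by (simp add: blinfun.diff_left)
  also have "\<dots> \<le> norm (G1 - G2) * norm F" using norm_blinfun[of "G1 - G2" F] by simp
  also have "\<dots> \<le> norm (G1 - G2)" using F(2) mult_left_mono[OF F(2) norm_ge_zero[of "G1 - G2"]] by simp
  also have "\<dots> = dist G1 G2" by (simp add: dist_norm)
  also have "\<dots> \<le> diameter (clust_bidual x)" by (rule diameter_bounded_bound[OF bc G1x G2x])
  finally have part1: "2 * c \<le> delta_X x" by (simp add: delta_X_def)
  have dist_ge: "c \<le> dist G (canon_bidual y)" if G: "G \<in> clust_bidual x" for G y
  proof (rule field_le_epsilon)
    fix e :: real assume e: "e > 0"
    obtain N where N: "N \<ge> 1"
      "\<And>m \<gamma>. (\<forall>k. \<gamma> k \<ge> 0) \<Longrightarrow> c * (\<Sum>k<m. \<gamma> k) - e \<le> norm ((\<Sum>k<m. \<gamma> k *\<^sub>R x (N+k)) - y)"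
      using far[OF l1 e, of y] by blast
    define w2 where "w2 = (\<lambda>k. if k = 0 then - y else x (N + (k - 1)))"
    define b2 where "b2 = (\<lambda>k::nat. if k = 0 then - e else c)"
    have H2: "(\<Sum>k<n. \<alpha> k * b2 k) \<le> norm (\<Sum>k<n. \<alpha> k *\<^sub>R w2 k)" if a: "\<And>k. \<alpha> k \<ge> 0" for n \<alpha>
    proof (cases n)
      case 0 then show ?thesis by simp
    next
      case (Suc m)
      define \<gamma> where "\<gamma> = (\<lambda>k. \<alpha> (Suc k))"
      have g0: "\<forall>k. \<gamma> k \<ge> 0" using a by (simp add: \<gamma>_def)
      have e1: "(\<Sum>k<n. \<alpha> k * b2 k) = c * (\<Sum>k<m. \<gamma> k) - \<alpha> 0 * e"
        unfolding Suc sum.lessThan_Suc_shift by (simp add: b2_def \<gamma>_def sum_distrib_left mult.commute)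
      have e2: "(\<Sum>k<n. \<alpha> k *\<^sub>R w2 k) = (\<Sum>k<m. \<gamma> k *\<^sub>R x (N + k)) - \<alpha> 0 *\<^sub>R y"
        unfolding Suc sum.lessThan_Suc_shift by (simp add: w2_def \<gamma>_def)
      show ?thesis
      proof (cases "\<alpha> 0 = 0")
        case True
        have "c * (\<Sum>k<m. \<bar>\<gamma> k\<bar>) \<le> norm (\<Sum>k<m. \<gamma> k *\<^sub>R x (N + k))"
          by (rule l1_window[OF l1 N(1)])
        then show ?thesis using e1 e2 True g0 by simp
      next
        case False
        then have p: "\<alpha> 0 > 0" using a[of 0] by simp
        define \<gamma>' where "\<gamma>' = (\<lambda>k. \<gamma> k / \<alpha> 0)"
        have "c * (\<Sum>k<m. \<gamma>' k) - e \<le> norm ((\<Sum>k<m. \<gamma>' k *\<^sub>R x (N+k)) - y)"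
          using N(2)[of \<gamma>' m] g0 p by (simp add: \<gamma>'_def)
        then have "\<alpha> 0 * (c * (\<Sum>k<m. \<gamma>' k) - e) \<le> \<alpha> 0 * norm ((\<Sum>k<m. \<gamma>' k *\<^sub>R x (N+k)) - y)"
          using p by (simp add: mult_left_mono)
        moreover have "\<alpha> 0 * (c * (\<Sum>k<m. \<gamma>' k) - e) = c * (\<Sum>k<m. \<gamma> k) - \<alpha> 0 * e"
          using p by (simp add: \<gamma>'_def sum_divide_distrib[symmetric] algebra_simps)
        moreover have "\<alpha> 0 * norm ((\<Sum>k<m. \<gamma>' k *\<^sub>R x (N+k)) - y) = norm ((\<Sum>k<m. \<gamma> k *\<^sub>R x (N + k)) - \<alpha> 0 *\<^sub>R y)"
        proof -
          have "\<alpha> 0 *\<^sub>R ((\<Sum>k<m. \<gamma>' k *\<^sub>R x (N+k)) - y) = (\<Sum>k<m. \<gamma> k *\<^sub>R x (N + k)) - \<alpha> 0 *\<^sub>R y"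
            using p by (simp add: \<gamma>'_def scaleR_diff_right scaleR_sum_right)
          then show ?thesis using p by (metis abs_of_pos norm_scaleR)
        qed
        ultimately show ?thesis using e1 e2 by simp
      qed
    qed
    obtain g where g: "linear g" "\<And>z. g z \<le> norm z" "\<And>k. b2 k \<le> g (w2 k)"
      using cone_functional[of b2 w2] H2 by blast
    obtain F where F: "blinfun_apply F = g" "norm F \<le> 1" using mkF[OF g(1) g(2)] by blast
    have gy: "g y \<le> e" using g(3)[of 0] linear_neg[OF g(1), of y] by (simp add: w2_def b2_def)
    have gx: "c \<le> g (x (N + k))" for k using g(3)[of "Suc k"] by (simp add: w2_def b2_def)
    have "c \<le> blinfun_apply G F"
    proof (rule clust_ge[OF G])
      show "eventually (\<lambda>n. c \<le> blinfun_apply F (x n)) sequentially"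
        unfolding eventually_sequentially
      proof (intro exI allI impI)
        fix n assume "N \<le> n"
        then have "x n = x (N + (n - N))" by simp
        then show "c \<le> blinfun_apply F (x n)" using gx[of "n - N"] F(1) by simp
      qed
    qed
    then have "c - e \<le> blinfun_apply (G - canon_bidual y) F"
      using gy F(1) by (simp add: blinfun.diff_left canon_apply)
    also have "\<dots> \<le> norm (G - canon_bidual y) * norm F" using norm_blinfun[of "G - canon_bidual y" F] by simp
    also have "\<dots> \<le> norm (G - canon_bidual y)"
      using mult_left_mono[OF F(2) norm_ge_zero[of "G - canon_bidual y"]] by simp
    finally show "c \<le> dist G (canon_bidual y) + e" by (simp add: dist_norm)
  qed
  have "c \<le> setdist (clust_bidual x) (range canon_bidual)"
    by (rule le_setdistI) (use G1x dist_ge in auto)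
  with part1 show ?thesis by simp
qed


end
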